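(* For any permutation $\pi$ of $D$, the function $f:D'^2\to\mathbb{R}$ given by $f(x,y)=0$ if $x=y=0$ or if $x,y\in D$ with $x=\pi(y)$; $f(x,y)=1$ if $x,y\in D$ with $x\ne\pi(y)$; and $f(x,y)=\tfrac12$ if exactly one of $x,y$ equals $0$ (the basic $k$-submodular relaxation of the soft version of the constraint $(x=\pi(y))$) is $k$-submodular representable.
   Context: $D=\{1,\dots,k\}$, $D'=\{0\}\cup D$. For a variable set $X$ and $v\in X$ let $X_v=\{v_i:i\in D\}$. An $(X,k)$-network is a directed network with nonnegative capacities $c$ on vertex set $\bigcup_{v\in X}X_v\cup\{s,t\}$; an $s$-$t$ cut $S$ has capacity the total capacity of edges leaving $S$. For $\phi:X\to D'$, $S_\phi=\{s\}\cup\{v_{\phi(v)}:\phi(v)\ne0\}$; the network represents $g$ if $c(S_\phi)=g(\phi)$ for all $\phi$. For an $s$-$t$ cut $S$, $\nu(S)=\{s\}\cup\{v_i:S\cap X_v=\{v_i\}\}$; the network is $k$-submodular if $c(S)\ge c(\nu(S))$ for every $s$-$t$ cut. A function of variables $X$ is $k$-submodular representable if some $k$-submodular $(X,k)$-network represents it. *)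

theory Defs
  imports Complex_Main "HOL-Combinatorics.Permutations"
begin

datatype 'v vtx = Src | Snk | Nd 'v nat

definition vertices :: "'v set \<Rightarrow> nat \<Rightarrow> 'v vtx set" where
  "vertices X k = {Src, Snk} \<union> {Nd v i | v i. v \<in> X \<and> i \<in> {1..k}}"

definition var_block :: "nat \<Rightarrow> 'v \<Rightarrow> 'v vtx set" where
  "var_block k v = {Nd v i | i. i \<in> {1..k}}"

definition is_st_cut :: "'v set \<Rightarrow> nat \<Rightarrow> 'v vtx set \<Rightarrow> bool" where
  "is_st_cut X k S \<longleftrightarrow> S \<subseteq> vertices X k \<and> Src \<in> S \<and> Snk \<notin> S"

definition cut_cap :: "'v set \<Rightarrow> nat \<Rightarrow> ('v vtx \<Rightarrow> 'v vtx \<Rightarrow> real) \<Rightarrow> 'v vtx set \<Rightarrow> real" where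
  "cut_cap X k c S = (\<Sum>(u, w) \<in> S \<times> (vertices X k - S). c u w)"

definition S_of :: "'v set \<Rightarrow> ('v \<Rightarrow> nat) \<Rightarrow> 'v vtx set" where
  "S_of X \<phi> = {Src} \<union> {Nd v (\<phi> v) | v. v \<in> X \<and> \<phi> v \<noteq> 0}"

definition nu :: "'v set \<Rightarrow> nat \<Rightarrow> 'v vtx set \<Rightarrow> 'v vtx set" where
  "nu X k S = {Src} \<union> {Nd v i | v i. v \<in> X \<and> i \<in> {1..k} \<and> S \<inter> var_block k v = {Nd v i}}"

definition nonneg_caps :: "('v vtx \<Rightarrow> 'v vtx \<Rightarrow> real) \<Rightarrow> bool" where
  "nonneg_caps c \<longleftrightarrow> (\<forall>u w. 0 \<le> c u w)"

definition represents ::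
  "'v set \<Rightarrow> nat \<Rightarrow> ('v vtx \<Rightarrow> 'v vtx \<Rightarrow> real) \<Rightarrow> (('v \<Rightarrow> nat) \<Rightarrow> real) \<Rightarrow> bool" where
  "represents X k c g \<longleftrightarrow> (\<forall>\<phi>. (\<forall>v\<in>X. \<phi> v \<in> {0..k}) \<longrightarrow> cut_cap X k c (S_of X \<phi>) = g \<phi>)"

definition k_submodular_network :: "'v set \<Rightarrow> nat \<Rightarrow> ('v vtx \<Rightarrow> 'v vtx \<Rightarrow> real) \<Rightarrow> bool" where
  "k_submodular_network X k c \<longleftrightarrow>
     (\<forall>S. is_st_cut X k S \<longrightarrow> cut_cap X k c S \<ge> cut_cap X k c (nu X k S))"

definition k_submodular_representable :: "'v set \<Rightarrow> nat \<Rightarrow> (('v \<Rightarrow> nat) \<Rightarrow> real) \<Rightarrow> bool" where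
  "k_submodular_representable X k g \<longleftrightarrow>
     (\<exists>c. nonneg_caps c \<and> k_submodular_network X k c \<and> represents X k c g)"

definition soft_perm :: "(nat \<Rightarrow> nat) \<Rightarrow> nat \<Rightarrow> nat \<Rightarrow> real" where
  "soft_perm \<pi> x y =
     (if x = 0 \<and> y = 0 then 0
      else if x \<noteq> 0 \<and> y \<noteq> 0 then (if x = \<pi> y then 0 else 1)
      else 1/2)"

end

theory Submission
  imports Defs
begin


definition cc :: "nat \<Rightarrow> (nat\<Rightarrow>nat) \<Rightarrow> nat vtx \<Rightarrow> nat vtx \<Rightarrow> real" where
"cc k \<pi> u w = (\<Sum>j\<in>{1..k}. (1/2) * (of_bool (u = Nd 0 (\<pi> j) \<and> w = Nd 1 j) + of_bool (u = Nd 1 j \<and> w = Nd 0 (\<pi> j))))"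

lemma finite_vertices: "finite X \<Longrightarrow> finite (vertices X k)"
proof -
  assume "finite X"
  have "{Nd v i | v i. v \<in> X \<and> i \<in> {1..k}} = (\<lambda>(v,i). Nd v i) ` (X \<times> {1..k})" by auto
  then show ?thesis using \<open>finite X\<close> unfolding vertices_def by simp
qed

lemma sum_pair_delta:
  assumes "finite T"
  shows "(\<Sum>(u,w)\<in>T. (of_bool (u = a \<and> w = b) :: real)) = of_bool ((a,b) \<in> T)"
proof -
  have "(\<Sum>(u,w)\<in>T. (of_bool (u = a \<and> w = b) :: real)) = (\<Sum>p\<in>T. if p = (a,b) then 1 else 0)"
    by (rule sum.cong) auto
  also have "\<dots> = of_bool ((a,b) \<in> T)" using assms by (simp add: sum.delta')
  finally show ?thesis .
qed

lemma cap_formula: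
  assumes perm: "\<pi> permutes {1..k}" and SV: "S \<subseteq> vertices {0::nat,1} k"
  shows "cut_cap {0,1} k (cc k \<pi>) S = card {j\<in>{1..k}. (Nd 0 (\<pi> j) \<in> S) \<noteq> (Nd 1 j \<in> S)} / 2"
proof -
  let ?V = "vertices {0::nat,1} k"
  let ?T = "S \<times> (?V - S)"
  have fT: "finite ?T" using finite_vertices[of "{0::nat,1}" k] SV by (auto intro: finite_subset)
  have "cut_cap {0,1} k (cc k \<pi>) S = (\<Sum>(u,w)\<in>?T. \<Sum>j\<in>{1..k}. (1/2) * (of_bool (u = Nd 0 (\<pi> j) \<and> w = Nd 1 j) + of_bool (u = Nd 1 j \<and> w = Nd 0 (\<pi> j))))"
    unfolding cut_cap_def cc_def by simp
  also have "\<dots> = (\<Sum>j\<in>{1..k}. \<Sum>(u,w)\<in>?T. (1/2) * (of_bool (u = Nd 0 (\<pi> j) \<and> w = Nd 1 j) + of_bool (u = Nd 1 j \<and> w = Nd 0 (\<pi> j))))"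
    by (subst sum.swap) (simp add: case_prod_beta)
  also have "\<dots> = (\<Sum>j\<in>{1..k}. (1/2) * (of_bool ((Nd 0 (\<pi> j), Nd 1 j) \<in> ?T) + of_bool ((Nd 1 j, Nd 0 (\<pi> j)) \<in> ?T)))"
  proof (rule sum.cong[OF refl])
    fix j assume "j \<in> {1..k}"
    have "(\<Sum>(u,w)\<in>?T. (1/2::real) * (of_bool (u = Nd 0 (\<pi> j) \<and> w = Nd 1 j) + of_bool (u = Nd 1 j \<and> w = Nd 0 (\<pi> j))))
        = (1/2) * ((\<Sum>(u,w)\<in>?T. of_bool (u = Nd 0 (\<pi> j) \<and> w = Nd 1 j)) + (\<Sum>(u,w)\<in>?T. of_bool (u = Nd 1 j \<and> w = Nd 0 (\<pi> j))))"
      by (simp add: case_prod_beta sum.distrib flip: sum_divide_distrib)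
    then show "(\<Sum>(u,w)\<in>?T. (1/2::real) * (of_bool (u = Nd 0 (\<pi> j) \<and> w = Nd 1 j) + of_bool (u = Nd 1 j \<and> w = Nd 0 (\<pi> j))))
        = (1/2) * (of_bool ((Nd 0 (\<pi> j), Nd 1 j) \<in> ?T) + of_bool ((Nd 1 j, Nd 0 (\<pi> j)) \<in> ?T))"
      using sum_pair_delta[OF fT] by simp
  qed
  also have "\<dots> = (\<Sum>j\<in>{1..k}. (1/2) * of_bool ((Nd 0 (\<pi> j) \<in> S) \<noteq> (Nd 1 j \<in> S)))"
  proof (rule sum.cong[OF refl])
    fix j assume j: "j \<in> {1..k}"
    then have "\<pi> j \<in> {1..k}" using permutes_in_image[OF perm] by blast
    then have "Nd 0 (\<pi> j) \<in> ?V" "Nd 1 j \<in> ?V" using j unfolding vertices_def by auto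
    then show "(1/2::real) * (of_bool ((Nd 0 (\<pi> j), Nd 1 j) \<in> ?T) + of_bool ((Nd 1 j, Nd 0 (\<pi> j)) \<in> ?T))
      = (1/2) * of_bool ((Nd 0 (\<pi> j) \<in> S) \<noteq> (Nd 1 j \<in> S))" by auto
  qed
  also have "\<dots> = card {j\<in>{1..k}. (Nd 0 (\<pi> j) \<in> S) \<noteq> (Nd 1 j \<in> S)} / 2"
  proof -
    have h1: "(\<Sum>j\<in>{1..k}. of_bool ((Nd 0 (\<pi> j) \<in> S) \<noteq> (Nd 1 j \<in> S))::real) = card ({1..k} \<inter> {j. (Nd 0 (\<pi> j) \<in> S) \<noteq> (Nd 1 j \<in> S)})"
      by (rule sum_of_bool_eq) auto
    have h2: "{1..k} \<inter> {j. (Nd 0 (\<pi> j) \<in> S) \<noteq> (Nd 1 j \<in> S)} = {j\<in>{1..k}. (Nd 0 (\<pi> j) \<in> S) \<noteq> (Nd 1 j \<in> S)}" by auto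
    have "(\<Sum>j\<in>{1..k}. (1/2) * of_bool ((Nd 0 (\<pi> j) \<in> S) \<noteq> (Nd 1 j \<in> S))::real) = (1/2) * (\<Sum>j\<in>{1..k}. of_bool ((Nd 0 (\<pi> j) \<in> S) \<noteq> (Nd 1 j \<in> S))::real)"
      by (rule sum_distrib_left[symmetric])
    then show ?thesis unfolding h1 h2 by simp
  qed
  finally show ?thesis .
qed



lemma aux:
  assumes "P \<subseteq> {1..(k::nat)}" "Q \<subseteq> {1..k}"
  shows "card {j\<in>{1..k}. (P={j}) \<noteq> (Q={j})} \<le> card {j\<in>{1..k}. (j\<in>P) \<noteq> (j\<in>Q)}"
proof -
  let ?L = "{j\<in>{1..k}. (P={j}) \<noteq> (Q={j})}"
  let ?R = "{j\<in>{1..k}. (j\<in>P) \<noteq> (j\<in>Q)}"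
  have fR: "finite ?R" by simp
  have PQ: "P = Q" if "?R = {}"
  proof (rule set_eqI)
    fix j show "j \<in> P \<longleftrightarrow> j \<in> Q"
    proof (cases "j \<in> {1..k}")
      case True then show ?thesis using that by blast
    next
      case False then show ?thesis using assms by blast
    qed
  qed
  show ?thesis
  proof (cases "P = Q")
    case True
    then have e: "?L = {}" by simp
    show ?thesis unfolding e by simp
  next
    case False
    then have "?R \<noteq> {}" using PQ by blast
    then have r1: "1 \<le> card ?R" using fR by (simp add: Suc_leI card_gt_0_iff)
    show ?thesis
    proof (cases "\<exists>a b. P = {a} \<and> Q = {b}")
      case True
      then obtain a b where ab: "P = {a}" "Q = {b}" by blast
      have "?L = ?R" unfolding ab by auto
      then show ?thesis by simp
    next
      case nb: False
      have "card ?L \<le> Suc 0"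
      proof (rule card_le_Suc0_iff_eq[THEN iffD2])
        show "finite ?L" by simp
      next
        show "\<forall>x\<in>?L. \<forall>y\<in>?L. x = y"
        proof (intro ballI)
          fix x y assume x: "x \<in> ?L" and y: "y \<in> ?L"
          show "x = y"
          proof (rule ccontr)
            assume "x \<noteq> y"
            then show False using x y nb by auto
          qed
        qed
      qed
      then show ?thesis using r1 by linarith
    qed
  qed
qed

lemma block_single:
  "(S \<inter> var_block k v = {Nd v i}) \<longleftrightarrow> (i\<in>{1..k} \<and> Nd v i\<in>S \<and> (\<forall>i'\<in>{1..k}. Nd v i'\<in>S \<longrightarrow> i'=i))"
proof
  assume h: "S \<inter> var_block k v = {Nd v i}"
  then have "Nd v i \<in> var_block k v" "Nd v i \<in> S" by blast+
  then have "i \<in> {1..k}" unfolding var_block_def by blast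
  moreover have "i' = i" if "i'\<in>{1..k}" "Nd v i'\<in>S" for i'
  proof -
    have "Nd v i' \<in> var_block k v" using that(1) unfolding var_block_def by blast
    then have "Nd v i' \<in> {Nd v i}" using h that(2) by blast
    then show ?thesis by simp
  qed
  ultimately show "i\<in>{1..k} \<and> Nd v i\<in>S \<and> (\<forall>i'\<in>{1..k}. Nd v i'\<in>S \<longrightarrow> i'=i)"
    using \<open>Nd v i \<in> S\<close> by blast
next
  assume h: "i\<in>{1..k} \<and> Nd v i\<in>S \<and> (\<forall>i'\<in>{1..k}. Nd v i'\<in>S \<longrightarrow> i'=i)"
  show "S \<inter> var_block k v = {Nd v i}"
  proof (rule set_eqI)
    fix u show "u \<in> S \<inter> var_block k v \<longleftrightarrow> u \<in> {Nd v i}"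
      using h unfolding var_block_def by blast
  qed
qed

lemma nu_mem: "Nd v i \<in> nu X k S \<longleftrightarrow> v \<in> X \<and> (S \<inter> var_block k v = {Nd v i})"
proof
  assume "Nd v i \<in> nu X k S" then show "v \<in> X \<and> (S \<inter> var_block k v = {Nd v i})"
    unfolding nu_def by blast
next
  assume h: "v \<in> X \<and> (S \<inter> var_block k v = {Nd v i})"
  then have "Nd v i \<in> var_block k v" by blast
  then have "i \<in> {1..k}" unfolding var_block_def by blast
  then show "Nd v i \<in> nu X k S" using h unfolding nu_def by blast
qed

lemma nu0:
  assumes perm: "\<pi> permutes {1..k}" and j: "j \<in> {1..k}"
  shows "Nd 0 (\<pi> j) \<in> nu {0::nat,1} k S \<longleftrightarrow> {j\<in>{1..k}. Nd 0 (\<pi> j) \<in> S} = {j}"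
proof -
  have pj: "\<pi> j \<in> {1..k}" using permutes_in_image[OF perm] j by blast
  have inj: "\<pi> a = \<pi> b \<longleftrightarrow> a = b" for a b using permutes_inj[OF perm] by (simp add: inj_eq)
  have "Nd 0 (\<pi> j) \<in> nu {0::nat,1} k S \<longleftrightarrow> (Nd 0 (\<pi> j)\<in>S \<and> (\<forall>i'\<in>{1..k}. Nd 0 i'\<in>S \<longrightarrow> i'=\<pi> j))"
    unfolding nu_mem block_single using pj by simp
  also have "\<dots> \<longleftrightarrow> {j\<in>{1..k}. Nd 0 (\<pi> j) \<in> S} = {j}"
  proof
    assume h: "Nd 0 (\<pi> j)\<in>S \<and> (\<forall>i'\<in>{1..k}. Nd 0 i'\<in>S \<longrightarrow> i'=\<pi> j)"
    show "{j\<in>{1..k}. Nd 0 (\<pi> j) \<in> S} = {j}"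
    proof (rule set_eqI)
      fix j' show "j' \<in> {j\<in>{1..k}. Nd 0 (\<pi> j) \<in> S} \<longleftrightarrow> j' \<in> {j}"
      proof
        assume "j' \<in> {j\<in>{1..k}. Nd 0 (\<pi> j) \<in> S}"
        then have "j' \<in> {1..k}" "Nd 0 (\<pi> j') \<in> S" by auto
        moreover have "\<pi> j' \<in> {1..k}" using permutes_in_image[OF perm] \<open>j' \<in> {1..k}\<close> by blast
        ultimately have "\<pi> j' = \<pi> j" using h by blast
        then show "j' \<in> {j}" using inj by simp
      next
        assume "j' \<in> {j}" then show "j' \<in> {j\<in>{1..k}. Nd 0 (\<pi> j) \<in> S}" using h j by simp
      qed
    qed
  next
    assume h: "{j\<in>{1..k}. Nd 0 (\<pi> j) \<in> S} = {j}"
    have "Nd 0 (\<pi> j)\<in>S" using h by blast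
    moreover have "i' = \<pi> j" if "i'\<in>{1..k}" "Nd 0 i'\<in>S" for i'
    proof -
      have e: "\<pi> (inv \<pi> i') = i'" using permutes_inverses(1)[OF perm] by simp
      have "inv \<pi> i' \<in> {1..k}" using permutes_in_image[OF permutes_inv[OF perm]] that(1) by blast
      then have "inv \<pi> i' \<in> {j\<in>{1..k}. Nd 0 (\<pi> j) \<in> S}" using e that(2) by simp
      then have "inv \<pi> i' = j" using h by blast
      then show ?thesis using e by simp
    qed
    ultimately show "Nd 0 (\<pi> j)\<in>S \<and> (\<forall>i'\<in>{1..k}. Nd 0 i'\<in>S \<longrightarrow> i'=\<pi> j)" by blast
  qed
  finally show ?thesis .
qed

lemma nu1:
  assumes j: "j \<in> {1..k}"
  shows "Nd 1 j \<in> nu {0::nat,1} k S \<longleftrightarrow> {j\<in>{1..k}. Nd 1 j \<in> S} = {j}"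
proof -
  have "Nd 1 j \<in> nu {0::nat,1} k S \<longleftrightarrow> (Nd 1 j\<in>S \<and> (\<forall>i'\<in>{1..k}. Nd 1 i'\<in>S \<longrightarrow> i'=j))"
    unfolding nu_mem block_single using j by simp
  also have "\<dots> \<longleftrightarrow> {j\<in>{1..k}. Nd 1 j \<in> S} = {j}"
  proof
    assume h: "Nd 1 j\<in>S \<and> (\<forall>i'\<in>{1..k}. Nd 1 i'\<in>S \<longrightarrow> i'=j)"
    show "{j\<in>{1..k}. Nd 1 j \<in> S} = {j}"
      by (rule set_eqI) (use h j in blast)
  next
    assume h: "{j\<in>{1..k}. Nd 1 j \<in> S} = {j}"
    show "Nd 1 j\<in>S \<and> (\<forall>i'\<in>{1..k}. Nd 1 i'\<in>S \<longrightarrow> i'=j)"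
      using h by blast
  qed
  finally show ?thesis .
qed

lemma represents_part:
  assumes perm: "\<pi> permutes {1..k}"
  shows "represents {0::nat, 1} k (cc k \<pi>) (\<lambda>\<phi>. soft_perm \<pi> (\<phi> 0) (\<phi> 1))"
  unfolding represents_def
proof (intro allI impI)
  fix \<phi> :: "nat \<Rightarrow> nat"
  assume rng: "\<forall>v\<in>{0,1}. \<phi> v \<in> {0..k}"
  define x where "x = \<phi> 0"
  define y where "y = \<phi> 1"
  have x: "x \<le> k" and y: "y \<le> k" using rng x_def y_def by auto
  let ?S = "S_of {0::nat,1} \<phi>"
  have SV: "?S \<subseteq> vertices {0,1} k" using rng unfolding S_of_def vertices_def by auto
  have m0: "Nd 0 i \<in> ?S \<longleftrightarrow> x \<noteq> 0 \<and> i = x" for i unfolding S_of_def x_def by auto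
  have m1: "Nd 1 i \<in> ?S \<longleftrightarrow> y \<noteq> 0 \<and> i = y" for i unfolding S_of_def y_def by auto
  have E: "{j\<in>{1..k}. (Nd 0 (\<pi> j) \<in> ?S) \<noteq> (Nd 1 j \<in> ?S)} = {j\<in>{1..k}. (x \<noteq> 0 \<and> j = inv \<pi> x) \<noteq> (y \<noteq> 0 \<and> j = y)}"
  proof -
    have pe: "(\<pi> j = x) \<longleftrightarrow> (j = inv \<pi> x)" for j using permutes_inv_eq[OF perm, of x j] by auto
    show ?thesis unfolding m0 m1 pe by simp
  qed
  have ix: "x \<noteq> 0 \<Longrightarrow> inv \<pi> x \<in> {1..k}" using x permutes_in_image[OF permutes_inv[OF perm]] by auto
  let ?B = "{j\<in>{1..k}. (x \<noteq> 0 \<and> j = inv \<pi> x) \<noteq> (y \<noteq> 0 \<and> j = y)}"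
  have main: "real (card ?B) / 2 = soft_perm \<pi> x y"
  proof (cases "x = 0")
    case True
    show ?thesis
    proof (cases "y = 0")
      case True
      have e: "?B = {}" using \<open>x = 0\<close> True by blast
      show ?thesis unfolding e using \<open>x = 0\<close> True by (simp add: soft_perm_def)
    next
      case False
      have e: "?B = {y}" using \<open>x = 0\<close> y False by auto
      show ?thesis unfolding e using \<open>x = 0\<close> False by (simp add: soft_perm_def)
    qed
  next
    case False
    note xn = False
    show ?thesis
    proof (cases "y = 0")
      case True
      have e: "?B = {inv \<pi> x}" using xn ix True by auto
      show ?thesis unfolding e using xn True by (simp add: soft_perm_def)
    next
      case False
      note yn = False
      show ?thesis
      proof (cases "x = \<pi> y")
        case True
        then have "inv \<pi> x = y" using permutes_inv_eq[OF perm, of x y] by simp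
        then have e: "?B = {}" using xn yn by blast
        show ?thesis unfolding e using xn yn True by (simp add: soft_perm_def)
      next
        case False
        then have ne: "inv \<pi> x \<noteq> y" using permutes_inv_eq[OF perm, of x y] by simp
        then have e: "?B = {inv \<pi> x, y}" using xn yn ix y by auto
        show ?thesis unfolding e using xn yn False ne by (simp add: soft_perm_def)
      qed
    qed
  qed
  have "cut_cap {0, 1} k (cc k \<pi>) ?S = real (card ?B) / 2"
    using cap_formula[OF perm SV] unfolding E .
  also note main
  finally show "cut_cap {0, 1} k (cc k \<pi>) ?S = soft_perm \<pi> (\<phi> 0) (\<phi> 1)"
    unfolding x_def y_def .
qed


lemma submod_part:
  assumes perm: "\<pi> permutes {1..k}"
  shows "k_submodular_network {0::nat,1} k (cc k \<pi>)"
  unfolding k_submodular_network_def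
proof (intro allI impI)
  fix S assume "is_st_cut {0::nat,1} k S"
  then have SV: "S \<subseteq> vertices {0::nat,1} k" by (simp add: is_st_cut_def)
  have NV: "nu {0::nat,1} k S \<subseteq> vertices {0::nat,1} k" unfolding nu_def vertices_def by blast
  define P where "P = {j\<in>{1..k}. Nd 0 (\<pi> j) \<in> S}"
  define Q where "Q = {j\<in>{1..k}. Nd 1 j \<in> S}"
  have L: "{j\<in>{1..k}. (Nd 0 (\<pi> j) \<in> nu {0::nat,1} k S) \<noteq> (Nd 1 j \<in> nu {0::nat,1} k S)} = {j\<in>{1..k}. (P={j}) \<noteq> (Q={j})}"
  proof (rule set_eqI)
    fix j
    show "j \<in> {j\<in>{1..k}. (Nd 0 (\<pi> j) \<in> nu {0::nat,1} k S) \<noteq> (Nd 1 j \<in> nu {0::nat,1} k S)} \<longleftrightarrow> j \<in> {j\<in>{1..k}. (P={j}) \<noteq> (Q={j})}"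
    proof (cases "j \<in> {1..k}")
      case True
      show ?thesis using nu0[OF perm True, of S] nu1[OF True, of S] True unfolding P_def Q_def by simp
    next
      case False then show ?thesis by blast
    qed
  qed
  have R: "{j\<in>{1..k}. (Nd 0 (\<pi> j) \<in> S) \<noteq> (Nd 1 j \<in> S)} = {j\<in>{1..k}. (j\<in>P) \<noteq> (j\<in>Q)}"
    unfolding P_def Q_def by blast
  have "card {j\<in>{1..k}. (P={j}) \<noteq> (Q={j})} \<le> card {j\<in>{1..k}. (j\<in>P) \<noteq> (j\<in>Q)}"
    by (rule aux) (auto simp: P_def Q_def)
  then show "cut_cap {0,1} k (cc k \<pi>) S \<ge> cut_cap {0,1} k (cc k \<pi>) (nu {0,1} k S)"
    unfolding cap_formula[OF perm SV] cap_formula[OF perm NV] L R by simp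
qed

theorem lemma21:
  fixes k :: nat and \<pi> :: "nat \<Rightarrow> nat"
  assumes "\<pi> permutes {1..k}"
  shows "k_submodular_representable {0::nat, 1} k (\<lambda>\<phi>. soft_perm \<pi> (\<phi> 0) (\<phi> 1))"
proof -
  have "nonneg_caps (cc k \<pi>)" unfolding nonneg_caps_def cc_def by (auto intro!: sum_nonneg)
  then show ?thesis unfolding k_submodular_representable_def
    using submod_part[OF assms] represents_part[OF assms] by blast
qed

end
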